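(* Let $\mathcal F=(F,\rightarrowtail)$ be an argumentation framework and $A\subseteq F$. Then $A$ is strongly tenable if and only if $A$ is $1$-strongly tenable, i.e., Pro has a winning strategy starting with $X_0=A$ in the strong tenability game in which each move after $X_0$ introduces at most one new argument.
   Context: An argumentation framework (AF) $\mathcal F=(F,\rightarrowtail)$ consists of a (possibly infinite) set $F$ of arguments and a binary attack relation $\rightarrowtail\subseteq F\times F$. An argument $a$ attacks a set $B$ if $a\rightarrowtail b$ for some $b\in B$. $A^+=\{x\in F:\exists a\in A,\ a\rightarrowtail x\}$. A set is conflict-free if none of its elements attacks one of its elements. For $A,B\subseteq F$, $A$ is as cogent as $B$, written $A\succeq B$, if $A$ is conflict-free and every $b\in B$ that attacks $A$ belongs to $A^+$. Strong tenability game: a strong tenability dispute on $\mathcal F$ is a finite sequence $(X_0,\dots,X_n)$ of subsets of $F$, where even-indexed sets are moves of the Proponent (Pro) and odd-indexed sets are moves of the Opponent (Opp), such that (1) each $X_i$ is conflict-free; (2) $X_i\subseteq X_{i+2}$ whenever both are defined; (3) $X_1$ and each $X_{i+2}\setminus X_i$ are finite; (4) every Pro move $X_{2k}$ with $k\ge 1$ satisfies $X_{2k}\succeq X_{2k-1}$; (5) every Opp move $X_{2k+1}$ satisfies $X_{2k}\not\succeq X_{2k+1}$ (some element of $X_{2k+1}$ attacks $X_{2k}$ and is not in $X_{2k}^+$). Play starts with $X_0=A$ and players alternately extend the sequence so that it remains a dispute. A dispute is concluded if it has no legal extension; a concluded dispute is won by the player who made its last move. A strategy for Pro assigns to each dispute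 ending with an Opp move a legal Pro reply; it is winning if every concluded dispute starting with $X_0=A$ in which Pro follows it is won by Pro (infinite plays count as wins for Pro). $A$ is strongly tenable if Pro has a winning strategy starting with $X_0=A$. For $n\ge1$, the $n$-strong tenability game is the strong tenability game with the additional constraint that $|X_1|\le n$ and $|X_{i+2}\setminus X_i|\le n$ for every $i$ (each move except Pro's first introduces at most $n$ new arguments); $A$ is $n$-strongly tenable if Pro has a winning strategy starting with $X_0=A$ in this game. *)

theory Defs
  imports Main
begin

text \<open>An argumentation framework is given by a carrier set F of arguments and an
attack relation att (att a b means a attacks b), with att contained in F x F.\<close>

definition conflict_free :: "('a \<Rightarrow> 'a \<Rightarrow> bool) \<Rightarrow> 'a set \<Rightarrow> bool" where
  "conflict_free att S \<longleftrightarrow> \<not> (\<exists>a\<in>S. \<exists>b\<in>S. att a b)"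

definition attacked_by :: "('a \<Rightarrow> 'a \<Rightarrow> bool) \<Rightarrow> 'a set \<Rightarrow> 'a set" where
  "attacked_by att S = {x. \<exists>a\<in>S. att a x}"

definition cogent :: "('a \<Rightarrow> 'a \<Rightarrow> bool) \<Rightarrow> 'a set \<Rightarrow> 'a set \<Rightarrow> bool" where
  "cogent att A B \<longleftrightarrow> conflict_free att A \<and>
     (\<forall>b\<in>B. (\<exists>a\<in>A. att b a) \<longrightarrow> b \<in> attacked_by att A)"

text \<open>Disputes, as nonempty lists X_0, ..., X_n (index i = position in the list).
The bound bd = None gives the strong tenability game; bd = Some n gives the
n-strong tenability game.\<close>
definition dispute :: "'a set \<Rightarrow> ('a \<Rightarrow> 'a \<Rightarrow> bool) \<Rightarrow> nat option \<Rightarrow> 'a set list \<Rightarrow> bool" where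
  "dispute F att bd xs \<longleftrightarrow>
     xs \<noteq> [] \<and>
     (\<forall>i<length xs. xs ! i \<subseteq> F \<and> conflict_free att (xs ! i)) \<and>
     (\<forall>i. i + 2 < length xs \<longrightarrow> xs ! i \<subseteq> xs ! (i + 2)) \<and>
     (1 < length xs \<longrightarrow> finite (xs ! 1)) \<and>
     (\<forall>i. i + 2 < length xs \<longrightarrow> finite (xs ! (i + 2) - xs ! i)) \<and>
     (\<forall>k. 0 < k \<and> 2 * k < length xs \<longrightarrow> cogent att (xs ! (2 * k)) (xs ! (2 * k - 1))) \<and>
     (\<forall>k. 2 * k + 1 < length xs \<longrightarrow> \<not> cogent att (xs ! (2 * k)) (xs ! (2 * k + 1))) \<and>
     (\<forall>n. bd = Some n \<longrightarrow>
        (1 < length xs \<longrightarrow> card (xs ! 1) \<le> n) \<and>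
        (\<forall>i. i + 2 < length xs \<longrightarrow> card (xs ! (i + 2) - xs ! i) \<le> n))"

definition concluded :: "'a set \<Rightarrow> ('a \<Rightarrow> 'a \<Rightarrow> bool) \<Rightarrow> nat option \<Rightarrow> 'a set list \<Rightarrow> bool" where
  "concluded F att bd xs \<longleftrightarrow> dispute F att bd xs \<and> \<not> (\<exists>X. dispute F att bd (xs @ [X]))"

definition follows :: "('a set list \<Rightarrow> 'a set) \<Rightarrow> 'a set list \<Rightarrow> bool" where
  "follows \<sigma> xs \<longleftrightarrow> (\<forall>k. 0 < k \<and> 2 * k < length xs \<longrightarrow> xs ! (2 * k) = \<sigma> (take (2 * k) xs))"

text \<open>A winning strategy for Pro from A: it gives a legal reply to every dispute
starting with A, played according to it, and ending with an Opp move (even length);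
and every concluded such dispute is won by Pro (last move made by Pro, i.e. odd length).\<close>
definition winning_strategy ::
  "'a set \<Rightarrow> ('a \<Rightarrow> 'a \<Rightarrow> bool) \<Rightarrow> nat option \<Rightarrow> 'a set \<Rightarrow> ('a set list \<Rightarrow> 'a set) \<Rightarrow> bool" where
  "winning_strategy F att bd A \<sigma> \<longleftrightarrow>
     (\<forall>xs. dispute F att bd xs \<and> hd xs = A \<and> follows \<sigma> xs \<and> even (length xs)
            \<longrightarrow> dispute F att bd (xs @ [\<sigma> xs])) \<and>
     (\<forall>xs. concluded F att bd xs \<and> hd xs = A \<and> follows \<sigma> xs \<longrightarrow> odd (length xs))"

definition strongly_tenable :: "'a set \<Rightarrow> ('a \<Rightarrow> 'a \<Rightarrow> bool) \<Rightarrow> 'a set \<Rightarrow> bool" where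
  "strongly_tenable F att A \<longleftrightarrow> (\<exists>\<sigma>. winning_strategy F att None A \<sigma>)"

definition n_strongly_tenable :: "nat \<Rightarrow> 'a set \<Rightarrow> ('a \<Rightarrow> 'a \<Rightarrow> bool) \<Rightarrow> 'a set \<Rightarrow> bool" where
  "n_strongly_tenable n F att A \<longleftrightarrow> (\<exists>\<sigma>. winning_strategy F att (Some n) A \<sigma>)"

end

theory Submission
  imports Defs
begin


lemma dispute_single: "dispute F att bd [X] \<longleftrightarrow> X \<subseteq> F \<and> conflict_free att X"
  unfolding dispute_def by auto

lemma dispute_snoc:
  assumes ne: "xs \<noteq> []"
  shows "dispute F att bd (xs@[X]) \<longleftrightarrow> dispute F att bd xs \<and> X \<subseteq> F \<and> conflict_free att X \<and>
   (length xs = 1 \<longrightarrow> finite X \<and> (\<forall>m. bd = Some m \<longrightarrow> card X \<le> m)) \<and>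
   (2 \<le> length xs \<longrightarrow> xs!(length xs - 2) \<subseteq> X \<and> finite (X - xs!(length xs - 2)) \<and>
       (\<forall>m. bd = Some m \<longrightarrow> card (X - xs!(length xs - 2)) \<le> m)) \<and>
   (even (length xs) \<longrightarrow> cogent att X (xs!(length xs - 1))) \<and>
   (odd (length xs) \<longrightarrow> \<not> cogent att (xs!(length xs - 1)) X)" (is "?L \<longleftrightarrow> ?R")
proof
  assume L: ?L
  let ?n = "length xs"
  have nth: "\<And>i. i < ?n \<Longrightarrow> (xs@[X])!i = xs!i" by (simp add: nth_append)
  have nthn: "(xs@[X])!?n = X" by simp
  from L have D: "xs@[X] \<noteq> []"
    "\<forall>i<length (xs@[X]). (xs@[X]) ! i \<subseteq> F \<and> conflict_free att ((xs@[X]) ! i)"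
    "\<forall>i. i + 2 < length (xs@[X]) \<longrightarrow> (xs@[X]) ! i \<subseteq> (xs@[X]) ! (i + 2)"
    "1 < length (xs@[X]) \<longrightarrow> finite ((xs@[X]) ! 1)"
    "\<forall>i. i + 2 < length (xs@[X]) \<longrightarrow> finite ((xs@[X]) ! (i + 2) - (xs@[X]) ! i)"
    "\<forall>k. 0 < k \<and> 2 * k < length (xs@[X]) \<longrightarrow> cogent att ((xs@[X]) ! (2 * k)) ((xs@[X]) ! (2 * k - 1))"
    "\<forall>k. 2 * k + 1 < length (xs@[X]) \<longrightarrow> \<not> cogent att ((xs@[X]) ! (2 * k)) ((xs@[X]) ! (2 * k + 1))"
    "\<forall>n. bd = Some n \<longrightarrow>
        (1 < length (xs@[X]) \<longrightarrow> card ((xs@[X]) ! 1) \<le> n) \<and>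
        (\<forall>i. i + 2 < length (xs@[X]) \<longrightarrow> card ((xs@[X]) ! (i + 2) - (xs@[X]) ! i) \<le> n)"
    unfolding dispute_def by blast+
  have "dispute F att bd xs"
    unfolding dispute_def
  proof (intro conjI allI impI)
    show "xs \<noteq> []" by (rule ne)
  next
    fix i assume "i < ?n" thus "xs ! i \<subseteq> F" "conflict_free att (xs ! i)" using D(2)[rule_format, of i] nth[of i] by auto
  next
    fix i assume "i + 2 < ?n" thus "xs ! i \<subseteq> xs ! (i+2)" using D(3)[rule_format, of i] nth[of i] nth[of "i+2"] by auto
  next
    assume "1 < ?n" thus "finite (xs ! 1)" using D(4) nth[of 1] by auto
  next
    fix i assume "i + 2 < ?n" thus "finite (xs ! (i+2) - xs ! i)" using D(5)[rule_format, of i] nth[of i] nth[of "i+2"] by auto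
  next
    fix k assume "0 < k \<and> 2 * k < ?n" thus "cogent att (xs ! (2*k)) (xs ! (2*k-1))"
      using D(6)[rule_format, of k] nth[of "2*k"] nth[of "2*k-1"] by auto
  next
    fix k assume "2 * k + 1 < ?n" thus "\<not> cogent att (xs ! (2*k)) (xs ! (2*k+1))"
      using D(7)[rule_format, of k] nth[of "2*k"] nth[of "2*k+1"] by auto
  next
    fix m assume "bd = Some m" "1 < ?n" thus "card (xs ! 1) \<le> m" using D(8) nth[of 1] by auto
  next
    fix m i assume b: "bd = Some m" and a: "i + 2 < ?n"
    have "i + 2 < length (xs@[X])" using a by simp
    with D(8) b have "card ((xs@[X]) ! (i+2) - (xs@[X]) ! i) \<le> m" by blast
    thus "card (xs ! (i+2) - xs ! i) \<le> m" using a nth[of i] nth[of "i+2"] by simp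
  qed
  moreover have "X \<subseteq> F \<and> conflict_free att X" using D(2) nthn by (metis length_append_singleton lessI)
  moreover have "length xs = 1 \<longrightarrow> finite X \<and> (\<forall>m. bd = Some m \<longrightarrow> card X \<le> m)"
  proof
    assume l1: "length xs = 1"
    then have "(xs@[X])!1 = X" using nthn by simp
    then show "finite X \<and> (\<forall>m. bd = Some m \<longrightarrow> card X \<le> m)" using D(4) D(8) l1 by auto
  qed
  moreover have "2 \<le> length xs \<longrightarrow> xs!(length xs - 2) \<subseteq> X \<and> finite (X - xs!(length xs - 2)) \<and>
       (\<forall>m. bd = Some m \<longrightarrow> card (X - xs!(length xs - 2)) \<le> m)"
  proof
    assume "2 \<le> ?n"
    then have e: "?n - 2 + 2 = ?n" "?n - 2 < ?n" "?n - 2 + 2 < length (xs@[X])" by auto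
    show "xs!(length xs - 2) \<subseteq> X \<and> finite (X - xs!(length xs - 2)) \<and>
       (\<forall>m. bd = Some m \<longrightarrow> card (X - xs!(length xs - 2)) \<le> m)"
    proof -
      have c: "\<forall>m. bd = Some m \<longrightarrow> card ((xs@[X]) ! (?n - 2 + 2) - (xs@[X]) ! (?n - 2)) \<le> m"
        using D(8) e(3) by blast
      show ?thesis
        using D(3)[rule_format, OF e(3)] D(5)[rule_format, OF e(3)] c nth[OF e(2)] nthn
        unfolding e(1) by auto
    qed
  qed
  moreover have "even (length xs) \<longrightarrow> cogent att X (xs!(length xs - 1))"
  proof
    assume ev: "even ?n"
    then obtain k where k: "?n = 2 * k" by auto
    with ne have "0 < k" by (cases k) auto
    then show "cogent att X (xs!(length xs - 1))"
      using D(6)[rule_format, of k] k nthn nth[of "2*k-1"] by auto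
  qed
  moreover have "odd (length xs) \<longrightarrow> \<not> cogent att (xs!(length xs - 1)) X"
  proof
    assume ev: "odd ?n"
    then obtain k where k: "?n = 2 * k + 1" by (metis oddE)
    then show "\<not> cogent att (xs!(length xs - 1)) X"
      using D(7)[rule_format, of k] k nthn nth[of "2*k"] by auto
  qed
  ultimately show ?R by blast
next
  assume R: ?R
  let ?n = "length xs"
  have nth: "\<And>i. i < ?n \<Longrightarrow> (xs@[X])!i = xs!i" by (simp add: nth_append)
  have nthn: "(xs@[X])!?n = X" by simp
  from R have D: "xs \<noteq> []"
    "\<forall>i<length xs. xs ! i \<subseteq> F \<and> conflict_free att (xs ! i)"
    "\<forall>i. i + 2 < length xs \<longrightarrow> xs ! i \<subseteq> xs ! (i + 2)"
    "1 < length xs \<longrightarrow> finite (xs ! 1)"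
    "\<forall>i. i + 2 < length xs \<longrightarrow> finite (xs ! (i + 2) - xs ! i)"
    "\<forall>k. 0 < k \<and> 2 * k < length xs \<longrightarrow> cogent att (xs ! (2 * k)) (xs ! (2 * k - 1))"
    "\<forall>k. 2 * k + 1 < length xs \<longrightarrow> \<not> cogent att (xs ! (2 * k)) (xs ! (2 * k + 1))"
    "\<forall>n. bd = Some n \<longrightarrow>
        (1 < length xs \<longrightarrow> card (xs ! 1) \<le> n) \<and>
        (\<forall>i. i + 2 < length xs \<longrightarrow> card (xs ! (i + 2) - xs ! i) \<le> n)"
    unfolding dispute_def by blast+
  have R2: "X \<subseteq> F" "conflict_free att X"
   "length xs = 1 \<longrightarrow> finite X \<and> (\<forall>m. bd = Some m \<longrightarrow> card X \<le> m)"
   "2 \<le> length xs \<longrightarrow> xs!(length xs - 2) \<subseteq> X \<and> finite (X - xs!(length xs - 2)) \<and>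
       (\<forall>m. bd = Some m \<longrightarrow> card (X - xs!(length xs - 2)) \<le> m)"
   "even (length xs) \<longrightarrow> cogent att X (xs!(length xs - 1))"
   "odd (length xs) \<longrightarrow> \<not> cogent att (xs!(length xs - 1)) X" using R by blast+
  show ?L
    unfolding dispute_def
  proof (intro conjI allI impI)
    show "xs @ [X] \<noteq> []" by simp
  next
    fix i assume "i < length (xs@[X])"
    then have "i < ?n \<or> i = ?n" by auto
    thus "(xs@[X]) ! i \<subseteq> F" "conflict_free att ((xs@[X]) ! i)" using D(2) nth[of i] R2 by auto
  next
    fix i assume a: "i + 2 < length (xs@[X])"
    then consider (lt) "i + 2 < ?n" | (eq) "i + 2 = ?n" by force
    then have c: "(xs@[X]) ! i \<subseteq> (xs@[X]) ! (i+2) \<and> finite ((xs@[X]) ! (i+2) - (xs@[X]) ! i)"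
    proof cases
      case lt then show ?thesis
        using D(3)[rule_format, of i] D(5)[rule_format, of i] nth[of i] nth[of "i+2"] by auto
    next
      case eq then have i: "i = ?n - 2" "2 \<le> ?n" "i < ?n" by auto
      show ?thesis
        using R2(4) i nth[of i] nthn unfolding eq by auto
    qed
    thus "(xs@[X]) ! i \<subseteq> (xs@[X]) ! (i+2)" "finite ((xs@[X]) ! (i+2) - (xs@[X]) ! i)" by auto
  next
    fix m i assume b: "bd = Some m" and a: "i + 2 < length (xs@[X])"
    then consider (lt) "i + 2 < ?n" | (eq) "i + 2 = ?n" by force
    thus "card ((xs@[X]) ! (i+2) - (xs@[X]) ! i) \<le> m"
    proof cases
      case lt then show ?thesis
        using D(8) b nth[of i] nth[of "i+2"] by auto
    next
      case eq then have i: "i = ?n - 2" "2 \<le> ?n" "i < ?n" by auto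
      show ?thesis
        using R2(4) b i nth[of i] nthn unfolding eq by auto
    qed
  next
    assume a: "1 < length (xs@[X])"
    then have "1 < ?n \<or> 1 = ?n" by (simp only: length_append_singleton) linarith
    thus "finite ((xs@[X]) ! 1)" using D(4) R2(3) by (auto simp: nth_append)
  next
    fix m assume b: "bd = Some m" and a: "1 < length (xs@[X])"
    then have "1 < ?n \<or> 1 = ?n" by (simp only: length_append_singleton) linarith
    thus "card ((xs@[X]) ! 1) \<le> m" using D(8) b R2(3) by (auto simp: nth_append)
  next
    fix k assume a: "0 < k \<and> 2 * k < length (xs@[X])"
    then consider (lt) "2*k < ?n" | (eq) "2*k = ?n" by (simp only: length_append_singleton) linarith
    thus "cogent att ((xs@[X]) ! (2*k)) ((xs@[X]) ! (2*k-1))"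
    proof cases
      case lt then show ?thesis using D(6)[rule_format, of k] a nth[of "2*k"] nth[of "2*k-1"] by simp
    next
      case eq
      then have "even ?n" by (metis dvd_triv_left)
      then have "cogent att X (xs!(?n - 1))" using R2(5) by blast
      moreover have "(xs@[X]) ! (2*k) = X" using eq nthn by simp
      moreover have "(xs@[X]) ! (2*k-1) = xs!(?n - 1)" using eq a nth[of "2*k-1"] by simp
      ultimately show ?thesis by simp
    qed
  next
    fix k assume a: "2 * k + 1 < length (xs@[X])"
    then consider (lt) "2*k+1 < ?n" | (eq) "2*k+1 = ?n" by (simp only: length_append_singleton) linarith
    thus "\<not> cogent att ((xs@[X]) ! (2*k)) ((xs@[X]) ! (2*k+1))"
    proof cases
      case lt then show ?thesis using D(7)[rule_format, of k] nth[of "2*k"] nth[of "2*k+1"] by simp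
    next
      case eq
      then have "odd ?n" by (metis even_add dvd_triv_left odd_one)
      then have "\<not> cogent att (xs!(?n - 1)) X" using R2(6) by blast
      moreover have "(xs@[X]) ! (2*k+1) = X" using eq nthn by simp
      moreover have "(xs@[X]) ! (2*k) = xs!(?n - 1)"
      proof -
        have e: "?n - 1 = 2*k" using eq by simp
        show ?thesis using eq nth[of "2*k"] unfolding e by simp
      qed
      ultimately show ?thesis by simp
    qed
  qed
qed

lemma follows_snoc:
  "follows \<sigma> (xs@[X]) \<longleftrightarrow> follows \<sigma> xs \<and> (even (length xs) \<and> 0 < length xs \<longrightarrow> X = \<sigma> xs)"
proof -
  have "follows \<sigma> (xs@[X]) \<longleftrightarrow> (\<forall>k. 0 < k \<and> 2 * k < length xs + 1 \<longrightarrow> (xs@[X]) ! (2 * k) = \<sigma> (take (2 * k) (xs@[X])))"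
    unfolding follows_def by simp
  also have "\<dots> \<longleftrightarrow> (\<forall>k. 0 < k \<and> 2 * k < length xs \<longrightarrow> xs ! (2 * k) = \<sigma> (take (2 * k) xs)) \<and>
      (\<forall>k. 0 < k \<and> 2 * k = length xs \<longrightarrow> X = \<sigma> xs)"
    by (auto simp: nth_append less_Suc_eq)
  also have "\<dots> \<longleftrightarrow> follows \<sigma> xs \<and> (even (length xs) \<and> 0 < length xs \<longrightarrow> X = \<sigma> xs)"
  proof -
    have "(\<forall>k. 0 < k \<and> 2 * k = length xs \<longrightarrow> X = \<sigma> xs) \<longleftrightarrow> (even (length xs) \<and> 0 < length xs \<longrightarrow> X = \<sigma> xs)"
    proof
      assume H: "\<forall>k. 0 < k \<and> 2 * k = length xs \<longrightarrow> X = \<sigma> xs"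
      show "even (length xs) \<and> 0 < length xs \<longrightarrow> X = \<sigma> xs"
      proof
        assume "even (length xs) \<and> 0 < length xs"
        then obtain k where "length xs = 2 * k" "0 < k" by (auto elim!: evenE)
        then show "X = \<sigma> xs" using H by auto
      qed
    next
      assume H: "even (length xs) \<and> 0 < length xs \<longrightarrow> X = \<sigma> xs"
      show "\<forall>k. 0 < k \<and> 2 * k = length xs \<longrightarrow> X = \<sigma> xs"
      proof (intro allI impI)
        fix k assume a: "0 < k \<and> 2 * k = length xs"
        then have "even (length xs)" by (metis dvd_triv_left)
        with a show "X = \<sigma> xs" using H by auto
      qed
    qed
    then show ?thesis unfolding follows_def by simp
  qed
  finally show ?thesis .
qed

lemma follows_single: "follows \<sigma> [X]" unfolding follows_def by auto



definition opp :: "'a set list \<Rightarrow> 'a set" where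
  "opp xs = (if 3 \<le> length xs then xs ! (length xs - 2) else {})"

lemma opp_snoc2[simp]: "xs \<noteq> [] \<Longrightarrow> opp (xs @ [O', P]) = O'"
  unfolding opp_def by (cases xs) (auto simp: nth_append)

lemma opp_single[simp]: "opp [X] = {}" unfolding opp_def by simp

lemma opp_odd: "odd (length xs) \<Longrightarrow> 2 \<le> length xs \<Longrightarrow> xs ! (length xs - 2) = opp xs"
  unfolding opp_def by (cases "length xs = 2") auto

lemma opp_len1: "length xs = 1 \<Longrightarrow> opp xs = {}" unfolding opp_def by simp

lemma nth_last': "xs \<noteq> [] \<Longrightarrow> xs ! (length xs - 1) = last xs" by (simp add: last_conv_nth)

lemma nth_snoc_prev: "xs \<noteq> [] \<Longrightarrow> (xs@[X]) ! (length (xs@[X]) - 2) = last xs"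
  by (cases xs rule: rev_exhaust) (auto simp: nth_append)

lemma nth_snoc_last: "(xs@[X]) ! (length (xs@[X]) - 1) = X" by simp

lemma cogent_empty: "cogent att P {} \<longleftrightarrow> conflict_free att P" unfolding cogent_def by simp

lemma cf_subset: "conflict_free att Q \<Longrightarrow> P \<subseteq> Q \<Longrightarrow> conflict_free att P"
  unfolding conflict_free_def by blast

lemma dispute_ne: "dispute F att bd xs \<Longrightarrow> xs \<noteq> []" unfolding dispute_def by simp

lemma dispute_last: "dispute F att bd xs \<Longrightarrow> last xs \<subseteq> F \<and> conflict_free att (last xs)"
proof -
  assume d: "dispute F att bd xs"
  then have "xs \<noteq> []" by (rule dispute_ne)
  then have "length xs - 1 < length xs" "last xs = xs ! (length xs - 1)" by (auto simp: last_conv_nth)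
  with d show ?thesis unfolding dispute_def by metis
qed

lemma card_le1_mem: "finite S \<Longrightarrow> card S \<le> 1 \<Longrightarrow> b \<in> S \<Longrightarrow> S = {b}"
  by (metis card_le_Suc0_iff_eq One_nat_def singleton_iff subsetI subset_antisym insertI1 empty_subsetI insert_subset)

lemma strategy_from_invariant:
  assumes base: "dispute F att bd [A] \<Longrightarrow> Inv [A]"
  and step: "\<And>xs O'. Inv xs \<Longrightarrow> dispute F att bd xs \<Longrightarrow> hd xs = A \<Longrightarrow> odd (length xs) \<Longrightarrow>
      dispute F att bd (xs@[O']) \<Longrightarrow> \<exists>P'. dispute F att bd (xs@[O',P']) \<and> Inv (xs@[O',P'])"
  shows "\<exists>\<sigma>. winning_strategy F att bd A \<sigma>"
proof -
  define \<sigma> where "\<sigma> = (\<lambda>ys. SOME P'. dispute F att bd (ys@[P']) \<and> Inv (ys@[P']))"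
  have inv: "\<And>xs. length xs = n \<Longrightarrow> dispute F att bd xs \<Longrightarrow> hd xs = A \<Longrightarrow> follows \<sigma> xs \<Longrightarrow> odd n \<Longrightarrow> Inv xs" for n
  proof (induction n rule: less_induct)
    case (less n xs)
    show ?case
    proof (cases "n = 1")
      case True
      then obtain X where "xs = [X]" using less.prems(1) by (cases xs) auto
      then show ?thesis using less.prems base by simp
    next
      case False
      with less.prems(5) have n3: "3 \<le> n" by presburger
      obtain ys P' where xs: "xs = ys @ [P']" using less.prems(1) n3 by (cases xs rule: rev_exhaust) auto
      obtain zs O' where ys: "ys = zs @ [O']" using less.prems(1) n3 xs by (cases ys rule: rev_exhaust) auto
      have zsne: "zs \<noteq> []" using less.prems(1) n3 xs ys by auto
      have lz: "length zs = n - 2" using less.prems(1) xs ys by simp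
      have d1: "dispute F att bd (zs@[O'])" using less.prems(2) dispute_snoc[of "zs@[O']"] xs ys by auto
      have d0: "dispute F att bd zs" using d1 dispute_snoc[of zs] zsne by auto
      have f1: "follows \<sigma> (zs@[O'])" "P' = \<sigma> (zs@[O'])"
        using less.prems(4) follows_snoc[of \<sigma> "zs@[O']" P'] xs ys lz n3 less.prems(5) by auto
      have f0: "follows \<sigma> zs" using f1(1) follows_snoc[of \<sigma> zs O'] by auto
      have hz: "hd zs = A" using less.prems(3) xs ys zsne by simp
      have "Inv zs" using less.IH[of "n-2" zs] lz d0 hz f0 less.prems(5) n3 by auto
      then have "\<exists>P'. dispute F att bd (zs@[O',P']) \<and> Inv (zs@[O',P'])"
        using step d0 hz lz less.prems(5) n3 d1 by auto
      then have "dispute F att bd ((zs@[O'])@[\<sigma> (zs@[O'])]) \<and> Inv ((zs@[O'])@[\<sigma> (zs@[O'])])"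
        unfolding \<sigma>_def by (simp, rule someI_ex)
      then show ?thesis using xs ys f1 by simp
    qed
  qed
  have W1: "dispute F att bd (xs @ [\<sigma> xs])"
    if a: "dispute F att bd xs" "hd xs = A" "follows \<sigma> xs" "even (length xs)" for xs
  proof -
    have ne: "xs \<noteq> []" using a(1) by (rule dispute_ne)
    obtain zs O' where xs: "xs = zs @ [O']" using ne by (cases xs rule: rev_exhaust) auto
    have zsne: "zs \<noteq> []" using a(4) xs by auto
    have d0: "dispute F att bd zs" using a(1) dispute_snoc[of zs] zsne xs by auto
    have f0: "follows \<sigma> zs" using a(3) follows_snoc[of \<sigma> zs O'] xs by auto
    have hz: "hd zs = A" using a(2) xs zsne by simp
    have oz: "odd (length zs)" using a(4) xs by simp
    have "Inv zs" using inv[OF refl d0 hz f0 oz] .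
    then have "\<exists>P'. dispute F att bd (zs@[O',P']) \<and> Inv (zs@[O',P'])"
      using step d0 hz oz a(1) xs by auto
    then have "dispute F att bd (xs@[\<sigma> xs]) \<and> Inv (xs@[\<sigma> xs])"
      unfolding \<sigma>_def xs by (simp, rule someI_ex)
    then show ?thesis by simp
  qed
  have "winning_strategy F att bd A \<sigma>"
    unfolding winning_strategy_def
  proof (intro conjI allI impI)
    fix xs assume "dispute F att bd xs \<and> hd xs = A \<and> follows \<sigma> xs \<and> even (length xs)"
    then show "dispute F att bd (xs @ [\<sigma> xs])" using W1 by blast
  next
    fix xs assume a: "concluded F att bd xs \<and> hd xs = A \<and> follows \<sigma> xs"
    show "odd (length xs)"
    proof (rule ccontr)
      assume "\<not> odd (length xs)"
      then have "dispute F att bd (xs @ [\<sigma> xs])" using W1 a unfolding concluded_def by blast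
      then show False using a unfolding concluded_def by blast
    qed
  qed
  then show ?thesis by blast
qed


lemma W1_of:
  assumes "winning_strategy F att bd A \<sigma>" "dispute F att bd xs" "hd xs = A" "follows \<sigma> xs" "even (length xs)"
  shows "dispute F att bd (xs @ [\<sigma> xs])"
  using assms unfolding winning_strategy_def by blast

lemma dir1:
  assumes W: "winning_strategy F att None A \<sigma>"
  shows "\<exists>\<tau>. winning_strategy F att (Some 1) A \<tau>"
proof (rule strategy_from_invariant[where Inv = "\<lambda>xs. (\<exists>ys. dispute F att None ys \<and> hd ys = A \<and> follows \<sigma> ys \<and>
     odd (length ys) \<and> last xs \<subseteq> last ys \<and> opp ys \<subseteq> opp xs) \<and> finite (opp xs) \<and>
     opp xs \<subseteq> attacked_by att (last xs)"])
  assume "dispute F att (Some 1) [A]"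
  then have "dispute F att None [A]" by (simp add: dispute_single)
  then show "(\<exists>ys. dispute F att None ys \<and> hd ys = A \<and> follows \<sigma> ys \<and>
     odd (length ys) \<and> last [A] \<subseteq> last ys \<and> opp ys \<subseteq> opp [A]) \<and> finite (opp [A]) \<and>
     opp [A] \<subseteq> attacked_by att (last [A])"
    by (intro conjI exI[of _ "[A]"]) (auto simp: follows_single)
next
  fix xs Oo'
  assume G: "(\<exists>ys. dispute F att None ys \<and> hd ys = A \<and> follows \<sigma> ys \<and>
     odd (length ys) \<and> last xs \<subseteq> last ys \<and> opp ys \<subseteq> opp xs) \<and> finite (opp xs) \<and>
     opp xs \<subseteq> attacked_by att (last xs)"
    and dx: "dispute F att (Some 1) xs" and hx: "hd xs = A" and ox: "odd (length xs)"
    and dxo: "dispute F att (Some 1) (xs @ [Oo'])"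
  define P where "P = last xs"
  define Oo where "Oo = opp xs"
  have ne: "xs \<noteq> []" using dx by (rule dispute_ne)
  have sn: "Oo' \<subseteq> F" "conflict_free att Oo'"
    "length xs = 1 \<longrightarrow> finite Oo' \<and> card Oo' \<le> 1"
    "2 \<le> length xs \<longrightarrow> Oo \<subseteq> Oo' \<and> finite (Oo' - Oo) \<and> card (Oo' - Oo) \<le> 1"
    "\<not> cogent att P Oo'"
    using dxo dispute_snoc[of xs F att "Some 1" Oo'] ne ox opp_odd[of xs] nth_last'[OF ne]
    unfolding P_def Oo_def by auto
  have cfP: "conflict_free att P" using dispute_last[OF dx] P_def by simp
  obtain b a where b: "b \<in> Oo'" "a \<in> P" "att b a" "b \<notin> attacked_by att P"
    using sn(5) cfP unfolding cogent_def by blast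
  have OP: "Oo \<subseteq> attacked_by att P" "finite Oo" using G Oo_def P_def by auto
  have l1O: "length xs = 1 \<Longrightarrow> Oo = {}" using opp_len1 Oo_def by simp
  have OO': "Oo \<subseteq> Oo'"
  proof (cases "length xs = 1")
    case False then have "2 \<le> length xs" using ox by presburger
    then show ?thesis using sn(4) by blast
  qed (use l1O in auto)
  have bO: "b \<notin> Oo" using OP b(4) by blast
  have Oo'eq: "Oo' = insert b Oo"
  proof (cases "length xs = 1")
    case True then show ?thesis using sn(3) b(1) card_le1_mem[of Oo' b] l1O by auto
  next
    case False
    then have "2 \<le> length xs" using ox by presburger
    then have "Oo' - Oo = {b}" using sn(4) b(1) bO card_le1_mem[of "Oo' - Oo" b] by auto
    then show ?thesis using OO' by blast
  qed
  have finO': "finite Oo'" using Oo'eq OP(2) by simp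
  obtain ys where ys: "dispute F att None ys" "hd ys = A" "follows \<sigma> ys" "odd (length ys)"
    "P \<subseteq> last ys" "opp ys \<subseteq> Oo" using G P_def Oo_def by blast
  have "\<exists>ys' x. dispute F att None ys' \<and> hd ys' = A \<and> follows \<sigma> ys' \<and> odd (length ys') \<and>
      P \<subseteq> last ys' \<and> x \<in> last ys' \<and> att x b \<and> opp ys' \<subseteq> Oo'"
  proof (cases "b \<in> attacked_by att (last ys)")
    case True
    then obtain x where "x \<in> last ys" "att x b" unfolding attacked_by_def by blast
    then show ?thesis using ys OO' by blast
  next
    case False
    define Q where "Q = last ys"
    have yne: "ys \<noteq> []" using ys(1) by (rule dispute_ne)
    have d1: "dispute F att None (ys @ [Oo'])"
    proof (subst dispute_snoc[OF yne], intro conjI impI)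
      show "dispute F att None ys" by (rule ys(1))
      show "Oo' \<subseteq> F" "conflict_free att Oo'" using sn by auto
      show "finite Oo'" by (rule finO')
      show "\<forall>m. None = Some m \<longrightarrow> card Oo' \<le> m" by simp
      show "\<forall>m. None = Some m \<longrightarrow> card (Oo' - ys ! (length ys - 2)) \<le> m" by simp
    next
      assume "2 \<le> length ys"
      then have "ys ! (length ys - 2) = opp ys" using opp_odd ys(4) by blast
      then show "ys ! (length ys - 2) \<subseteq> Oo'" "finite (Oo' - ys ! (length ys - 2))"
        using ys(6) OO' finO' by auto
    next
      assume "even (length ys)" then show "cogent att Oo' (ys ! (length ys - 1))" using ys(4) by simp
    next
      have "b \<in> Oo'" "\<exists>a\<in>last ys. att b a" "b \<notin> attacked_by att (last ys)"
        using b ys(5) False by auto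
      then show "\<not> cogent att (ys ! (length ys - 1)) Oo'"
        unfolding cogent_def nth_last'[OF yne] by blast
    qed
    have f1: "follows \<sigma> (ys @ [Oo'])" using ys(3) ys(4) follows_snoc[of \<sigma> ys Oo'] by simp
    define Q' where "Q' = \<sigma> (ys @ [Oo'])"
    have d2: "dispute F att None ((ys @ [Oo']) @ [Q'])"
      unfolding Q'_def using W1_of[OF W d1 _ f1] ys(2) ys(4) yne by simp
    have QQ': "last ys \<subseteq> Q'" "cogent att Q' Oo'"
      using d2 dispute_snoc[of "ys @ [Oo']" F att None Q'] nth_snoc_prev[OF yne, of Oo'] ys(4) yne
      by (auto simp: Suc_le_eq)
    have "b \<in> attacked_by att Q'"
      using QQ'(2) b ys(5) QQ'(1) unfolding cogent_def by blast
    then obtain x where x: "x \<in> Q'" "att x b" unfolding attacked_by_def by blast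
    have f2: "follows \<sigma> (ys @ [Oo', Q'])" using f1 follows_snoc[of \<sigma> "ys @ [Oo']" Q'] ys(4) Q'_def by simp
    show ?thesis
      apply (rule exI[of _ "ys @ [Oo', Q']"], rule exI[of _ x])
      using d2 f2 ys yne x QQ'(1) by auto
  qed
  then obtain ys' x where ys': "dispute F att None ys'" "hd ys' = A" "follows \<sigma> ys'" "odd (length ys')"
      "P \<subseteq> last ys'" "x \<in> last ys'" "att x b" "opp ys' \<subseteq> Oo'" by blast
  define P' where "P' = insert x P"
  have P'sub: "P' \<subseteq> last ys'" using ys'(5,6) P'_def by auto
  have cfP': "conflict_free att P'" using cf_subset dispute_last[OF ys'(1)] P'sub by blast
  have attP': "Oo' \<subseteq> attacked_by att P'"
    using Oo'eq OP(1) ys'(7) unfolding P'_def attacked_by_def by blast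
  have cogP': "cogent att P' Oo'" using cfP' attP' unfolding cogent_def by blast
  have d3: "dispute F att (Some 1) ((xs @ [Oo']) @ [P'])"
  proof (subst dispute_snoc, simp, intro conjI impI)
    show "dispute F att (Some 1) (xs @ [Oo'])" by (rule dxo)
    show "P' \<subseteq> F" using P'sub dispute_last[OF ys'(1)] by blast
    show "conflict_free att P'" by (rule cfP')
  next
    assume "length (xs @ [Oo']) = 1" then show "finite P'" using ne by simp
  next
    assume "length (xs @ [Oo']) = 1" then show "\<forall>m. Some 1 = Some m \<longrightarrow> card P' \<le> m" using ne by simp
  next
    have e: "(xs @ [Oo']) ! (length (xs @ [Oo']) - 2) = P" using nth_snoc_prev[OF ne] P_def by simp
    show "(xs @ [Oo']) ! (length (xs @ [Oo']) - 2) \<subseteq> P'" unfolding e P'_def by blast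
    show "finite (P' - (xs @ [Oo']) ! (length (xs @ [Oo']) - 2))" unfolding e P'_def
      by (rule finite_subset[of _ "{x}"]) auto
    have "P' - P \<subseteq> {x}" unfolding P'_def by blast
    then have "card (P' - P) \<le> 1" by (metis card.empty card.insert card_mono finite.emptyI finite.insertI empty_iff One_nat_def)
    then show "\<forall>m. Some 1 = Some m \<longrightarrow> card (P' - (xs @ [Oo']) ! (length (xs @ [Oo']) - 2)) \<le> m"
      unfolding e by simp
  next
    show "cogent att P' ((xs @ [Oo']) ! (length (xs @ [Oo']) - 1))" using cogP' by simp
  next
    assume "odd (length (xs @ [Oo']))" then show "\<not> cogent att ((xs @ [Oo']) ! (length (xs @ [Oo']) - 1)) P'"
      using ox by simp
  qed
  show "\<exists>P'. dispute F att (Some 1) (xs @ [Oo', P']) \<and>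
      (\<exists>ys. dispute F att None ys \<and> hd ys = A \<and> follows \<sigma> ys \<and> odd (length ys) \<and>
         last (xs @ [Oo', P']) \<subseteq> last ys \<and> opp ys \<subseteq> opp (xs @ [Oo', P'])) \<and>
      finite (opp (xs @ [Oo', P'])) \<and> opp (xs @ [Oo', P']) \<subseteq> attacked_by att (last (xs @ [Oo', P']))"
    apply (rule exI[of _ P'])
    using d3 ys' P'sub ne finO' attP' by auto
qed


lemma dir2:
  assumes W: "winning_strategy F att (Some 1) A \<tau>"
  shows "\<exists>\<sigma>. winning_strategy F att None A \<sigma>"
proof (rule strategy_from_invariant[where Inv = "\<lambda>xs. (\<exists>ys. dispute F att (Some 1) ys \<and> hd ys = A \<and> follows \<tau> ys \<and>
     odd (length ys) \<and> last ys = last xs \<and> opp ys \<subseteq> opp xs \<and> cogent att (last ys) (opp ys)) \<and> finite (opp xs)"])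
  assume "dispute F att None [A]"
  then have "dispute F att (Some 1) [A]" "conflict_free att A" by (simp_all add: dispute_single)
  then show "(\<exists>ys. dispute F att (Some 1) ys \<and> hd ys = A \<and> follows \<tau> ys \<and>
     odd (length ys) \<and> last ys = last [A] \<and> opp ys \<subseteq> opp [A] \<and> cogent att (last ys) (opp ys)) \<and> finite (opp [A])"
    by (intro conjI exI[of _ "[A]"]) (auto simp: follows_single cogent_empty)
next
  fix xs Oo'
  assume G: "(\<exists>ys. dispute F att (Some 1) ys \<and> hd ys = A \<and> follows \<tau> ys \<and>
     odd (length ys) \<and> last ys = last xs \<and> opp ys \<subseteq> opp xs \<and> cogent att (last ys) (opp ys)) \<and> finite (opp xs)"
    and dx: "dispute F att None xs" and hx: "hd xs = A" and ox: "odd (length xs)"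
    and dxo: "dispute F att None (xs @ [Oo'])"
  define P0 where "P0 = last xs"
  define Oo where "Oo = opp xs"
  have ne: "xs \<noteq> []" using dx by (rule dispute_ne)
  have sn: "Oo' \<subseteq> F" "conflict_free att Oo'"
    "length xs = 1 \<longrightarrow> finite Oo'"
    "2 \<le> length xs \<longrightarrow> Oo \<subseteq> Oo' \<and> finite (Oo' - Oo)"
    using dxo dispute_snoc[of xs F att None Oo'] ne ox opp_odd[of xs]
    unfolding Oo_def by auto
  have l1O: "length xs = 1 \<Longrightarrow> Oo = {}" using opp_len1 Oo_def by simp
  have finO: "finite Oo" using G Oo_def by simp
  have OO': "Oo \<subseteq> Oo'" "finite Oo'"
  proof (atomize (full), cases "length xs = 1")
    case False then have "2 \<le> length xs" using ox by presburger
    then show "Oo \<subseteq> Oo' \<and> finite Oo'" using sn(4) finO by (metis Diff_partition finite_Un)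
  qed (use l1O sn(3) in auto)
  have loop: "\<And>ys. card (Oo' - opp ys) = n \<Longrightarrow> dispute F att (Some 1) ys \<Longrightarrow> hd ys = A \<Longrightarrow> follows \<tau> ys \<Longrightarrow>
     odd (length ys) \<Longrightarrow> opp ys \<subseteq> Oo' \<Longrightarrow> P0 \<subseteq> last ys \<Longrightarrow> finite (last ys - P0) \<Longrightarrow>
     cogent att (last ys) (opp ys) \<Longrightarrow>
     \<exists>ys'. dispute F att (Some 1) ys' \<and> hd ys' = A \<and> follows \<tau> ys' \<and> odd (length ys') \<and>
       opp ys' \<subseteq> Oo' \<and> P0 \<subseteq> last ys' \<and> finite (last ys' - P0) \<and> cogent att (last ys') Oo' \<and>
       cogent att (last ys') (opp ys')" for n
  proof (induction n rule: less_induct)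
    case (less n ys)
    define P where "P = last ys"
    show ?case
    proof (cases "cogent att P Oo'")
      case True then show ?thesis using less.prems P_def by blast
    next
      case False
      have yne: "ys \<noteq> []" using less.prems(2) by (rule dispute_ne)
      have cfP: "conflict_free att P" using dispute_last[OF less.prems(2)] P_def by simp
      obtain d a where d: "d \<in> Oo'" "a \<in> P" "att d a" "d \<notin> attacked_by att P"
        using False cfP unfolding cogent_def by blast
      have dn: "d \<notin> opp ys" using less.prems(9) d P_def unfolding cogent_def by blast
      define S' where "S' = insert d (opp ys)"
      have S'sub: "S' \<subseteq> Oo'" using d(1) less.prems(6) S'_def by blast
      have d1: "dispute F att (Some 1) (ys @ [S'])"
      proof (subst dispute_snoc[OF yne], intro conjI impI)
        show "dispute F att (Some 1) ys" by (rule less.prems(2))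
        show "S' \<subseteq> F" using S'sub sn(1) by blast
        show "conflict_free att S'" using S'sub sn(2) cf_subset by blast
      next
        assume "length ys = 1"
        then have "opp ys = {}" by (rule opp_len1)
        then have "S' = {d}" using S'_def by simp
        then show "finite S'" "\<forall>m. Some 1 = Some m \<longrightarrow> card S' \<le> m" by auto
      next
        assume "2 \<le> length ys"
        then have e: "ys ! (length ys - 2) = opp ys" using opp_odd less.prems(5) by blast
        have "S' - opp ys = {d}" using dn S'_def by blast
        then show "ys ! (length ys - 2) \<subseteq> S'" "finite (S' - ys ! (length ys - 2))"
          "\<forall>m. Some 1 = Some m \<longrightarrow> card (S' - ys ! (length ys - 2)) \<le> m"
          unfolding e S'_def by auto
      next
        assume "even (length ys)" then show "cogent att S' (ys ! (length ys - 1))" using less.prems(5) by simp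
      next
        show "\<not> cogent att (ys ! (length ys - 1)) S'"
          unfolding cogent_def nth_last'[OF yne] P_def[symmetric] using d S'_def by blast
      qed
      have f1: "follows \<tau> (ys @ [S'])" using less.prems(4,5) follows_snoc[of \<tau> ys S'] by simp
      define P' where "P' = \<tau> (ys @ [S'])"
      have d2: "dispute F att (Some 1) ((ys @ [S']) @ [P'])"
        unfolding P'_def using W1_of[OF W d1 _ f1] less.prems(3,5) yne by simp
      have PP': "P \<subseteq> P'" "finite (P' - P)" "cogent att P' S'"
        using d2 dispute_snoc[of "ys @ [S']" F att "Some 1" P'] nth_snoc_prev[OF yne, of S'] less.prems(5) yne P_def
        by (auto simp: Suc_le_eq)
      have f2: "follows \<tau> (ys @ [S', P'])" using f1 follows_snoc[of \<tau> "ys @ [S']" P'] less.prems(5) P'_def by simp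
      have lt: "card (Oo' - S') < n"
      proof -
        have "Oo' - S' \<subset> Oo' - opp ys" using d(1) dn S'_def by blast
        then show ?thesis using less.prems(1) OO'(2) by (metis finite_Diff psubset_card_mono)
      qed
      have fin: "finite (P' - P0)"
      proof -
        have "P' - P0 \<subseteq> (P' - P) \<union> (P - P0)" by blast
        then show ?thesis using PP'(2) less.prems(8) P_def finite_subset by blast
      qed
      show ?thesis
        using less.IH[of "card (Oo' - S')" "ys @ [S', P']"] lt d2 less.prems(3) yne f2 less.prems(5) S'sub
           less.prems(7) PP' P_def fin by auto
    qed
  qed
  obtain ys where ys: "dispute F att (Some 1) ys" "hd ys = A" "follows \<tau> ys" "odd (length ys)"
    "last ys = P0" "opp ys \<subseteq> Oo" "cogent att (last ys) (opp ys)" using G P0_def Oo_def by blast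
  obtain ys' where ys': "dispute F att (Some 1) ys'" "hd ys' = A" "follows \<tau> ys'" "odd (length ys')"
       "opp ys' \<subseteq> Oo'" "P0 \<subseteq> last ys'" "finite (last ys' - P0)" "cogent att (last ys') Oo'"
       "cogent att (last ys') (opp ys')"
    using loop[OF refl ys(1-4)] ys(5-7) OO'(1) by auto
  define P' where "P' = last ys'"
  have d3: "dispute F att None ((xs @ [Oo']) @ [P'])"
  proof (subst dispute_snoc, simp, intro conjI impI)
    show "dispute F att None (xs @ [Oo'])" by (rule dxo)
    show "P' \<subseteq> F" "conflict_free att P'" using dispute_last[OF ys'(1)] P'_def by auto
  next
    assume "length (xs @ [Oo']) = 1" then show "finite P'" using ne by simp
  next
    assume "length (xs @ [Oo']) = 1" then show "\<forall>m. None = Some m \<longrightarrow> card P' \<le> m" by simp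
  next
    have e: "(xs @ [Oo']) ! (length (xs @ [Oo']) - 2) = P0" using nth_snoc_prev[OF ne] P0_def by simp
    show "(xs @ [Oo']) ! (length (xs @ [Oo']) - 2) \<subseteq> P'" unfolding e P'_def by (rule ys'(6))
    show "finite (P' - (xs @ [Oo']) ! (length (xs @ [Oo']) - 2))" unfolding e P'_def by (rule ys'(7))
    show "\<forall>m. None = Some m \<longrightarrow> card (P' - (xs @ [Oo']) ! (length (xs @ [Oo']) - 2)) \<le> m" by simp
  next
    show "cogent att P' ((xs @ [Oo']) ! (length (xs @ [Oo']) - 1))" using ys'(8) P'_def by simp
  next
    assume "odd (length (xs @ [Oo']))" then show "\<not> cogent att ((xs @ [Oo']) ! (length (xs @ [Oo']) - 1)) P'"
      using ox by simp
  qed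
  show "\<exists>P'. dispute F att None (xs @ [Oo', P']) \<and>
      (\<exists>ys. dispute F att (Some 1) ys \<and> hd ys = A \<and> follows \<tau> ys \<and> odd (length ys) \<and>
         last ys = last (xs @ [Oo', P']) \<and> opp ys \<subseteq> opp (xs @ [Oo', P']) \<and> cogent att (last ys) (opp ys)) \<and>
      finite (opp (xs @ [Oo', P']))"
    apply (rule exI[of _ P'])
    using d3 ys' P'_def ne OO'(2) by auto
qed

theorem theorem5:
  fixes F :: "'a set" and att :: "'a \<Rightarrow> 'a \<Rightarrow> bool" and A :: "'a set"
  assumes "\<forall>x y. att x y \<longrightarrow> x \<in> F \<and> y \<in> F"
    and "A \<subseteq> F"
  shows "strongly_tenable F att A \<longleftrightarrow> n_strongly_tenable 1 F att A"
  unfolding strongly_tenable_def n_strongly_tenable_def using dir1 dir2 by metis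

end
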